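(* Let $\mathbf{AUS}_3$ be the set of density matrices $\sigma$ on $\mathbb{C}^2\otimes\mathbb{C}^2$ such that for every unitary $U$ on $\mathbb{C}^2\otimes\mathbb{C}^2$, every choice of unit vectors $\hat u_1,\hat u_2,\hat u_3\in\mathbb{R}^3$ and every choice of orthonormal vectors $\hat v_1,\hat v_2,\hat v_3\in\mathbb{R}^3$, $$\frac{1}{\sqrt3}\Big|\sum_{i=1}^3\mathrm{Tr}\big(U\sigma U^\dagger\,(\hat u_i\cdot\vec s)\otimes(\hat v_i\cdot\vec s)\big)\Big|\le 1.$$ Let $|\Upsilon\rangle_{ABC}\in\mathbb{C}^2\otimes\mathbb{C}^2\otimes\mathbb{C}^2$ be any pure three-qubit state, with reduced states $\sigma_{AB}=\mathrm{Tr}_C|\Upsilon\rangle\langle\Upsilon|$ and $\sigma_C=\mathrm{Tr}_{AB}|\Upsilon\rangle\langle\Upsilon|$. Then $\sigma_{AB}\in\mathbf{AUS}_3$ if and only if $\sigma_C=I/2$ is the maximally mixed state.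
   Context: $\vec{s}=(s_1,s_2,s_3)$ denotes the vector of Pauli matrices, and for $\hat w\in\mathbb{R}^3$, $\hat w\cdot\vec s=\sum_k w_k s_k$. *)

theory Defs
  imports "HOL-Analysis.Analysis"
begin

definition cadj :: "complex^'n^'m \<Rightarrow> complex^'m^'n" where
  "cadj A = (\<chi> i j. cnj (A $ j $ i))"

definition mtrace :: "complex^'n^'n \<Rightarrow> complex" where
  "mtrace A = (\<Sum>i\<in>UNIV. A $ i $ i)"

definition kron :: "complex^'n^'n \<Rightarrow> complex^'m^'m \<Rightarrow> complex^('n \<times> 'm)^('n \<times> 'm)" where
  "kron A B = (\<chi> p q. A $ fst p $ fst q * B $ snd p $ snd q)"

definition unitary_mat :: "complex^'n^'n \<Rightarrow> bool" where
  "unitary_mat U \<longleftrightarrow> U ** cadj U = mat 1 \<and> cadj U ** U = mat 1"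

definition hermitian_mat :: "complex^'n^'n \<Rightarrow> bool" where
  "hermitian_mat A \<longleftrightarrow> cadj A = A"

definition density_mat :: "complex^'n^'n \<Rightarrow> bool" where
  "density_mat A \<longleftrightarrow> hermitian_mat A
     \<and> (\<forall>v::complex^'n. 0 \<le> Re (\<Sum>i\<in>UNIV. \<Sum>j\<in>UNIV. cnj (v $ i) * A $ i $ j * v $ j))
     \<and> mtrace A = 1"

text \<open>Pauli matrices (index type 2 has elements 0,1; the basis |0>,|1> corresponds to 0,1).\<close>
definition sx :: "complex^2^2" where
  "sx = (\<chi> i j. if i \<noteq> j then 1 else 0)"
definition sy :: "complex^2^2" where
  "sy = (\<chi> i j. if i = 0 \<and> j = 1 then - \<i> else if i = 1 \<and> j = 0 then \<i> else 0)"
definition sz :: "complex^2^2" where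
  "sz = (\<chi> i j. if i = j then (if i = 0 then 1 else -1) else 0)"

text \<open>Components of real^3 are indexed by type 3 with elements 0,1,2 = coordinates 1,2,3.\<close>
definition pauli :: "3 \<Rightarrow> complex^2^2" where
  "pauli k = (if k = 0 then sx else if k = 1 then sy else sz)"

definition pdot :: "real^3 \<Rightarrow> complex^2^2" where
  "pdot w = (\<chi> i j. \<Sum>k\<in>UNIV. complex_of_real (w $ k) * pauli k $ i $ j)"

definition AUS3 :: "(complex^(2\<times>2)^(2\<times>2)) set" where
  "AUS3 = {\<sigma>. density_mat \<sigma> \<and>
     (\<forall>(U::complex^(2\<times>2)^(2\<times>2)) (u::nat \<Rightarrow> real^3) (v::nat \<Rightarrow> real^3).
        unitary_mat U \<and> (\<forall>i\<in>{1..3}. norm (u i) = 1)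
        \<and> (\<forall>i\<in>{1..3}. \<forall>j\<in>{1..3}. v i \<bullet> v j = (if i = j then 1 else 0))
        \<longrightarrow> (1 / sqrt 3) * cmod (\<Sum>i=1..3. mtrace (U ** \<sigma> ** cadj U ** kron (pdot (u i)) (pdot (v i)))) \<le> 1)}"

definition outer :: "complex^'n \<Rightarrow> complex^'n^'n" where
  "outer x = (\<chi> i j. x $ i * cnj (x $ j))"

definition ptrace2 :: "complex^('a::finite \<times> 'b::finite)^('a \<times> 'b) \<Rightarrow> complex^'a^'a" where
  "ptrace2 R = (\<chi> i j. \<Sum>k\<in>UNIV. R $ (i, k) $ (j, k))"
definition ptrace1 :: "complex^('a::finite \<times> 'b::finite)^('a \<times> 'b) \<Rightarrow> complex^'b^'b" where
  "ptrace1 R = (\<chi> i j. \<Sum>k\<in>UNIV. R $ (k, i) $ (k, j))"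

definition maxmixed2 :: "complex^2^2" where
  "maxmixed2 = (\<chi> i j. if i = j then 1/2 else 0)"

end

theory Submission
  imports Defs
begin

lemma U2: "(UNIV::2 set) = {0,1}" using exhaust_2 by (metis (full_types) UNIV_2 one_add_one zero_neq_one add_0 insert_commute)
lemma sum2: "sum f (UNIV::2 set) = f 0 + f 1" by (simp add: U2)
lemma t3: "(3::3) = 0" by simp
lemma U3: "(UNIV::3 set) = {0,1,2}" proof - have "(UNIV::3 set) = {1,2,0}" using UNIV_3 t3 by simp
  then show ?thesis by blast qed
lemma sum3: "sum f (UNIV::3 set) = f 0 + f 1 + f 2" unfolding U3 by (simp add: add.assoc)
lemma sum_pair: "sum f (UNIV::('a::finite \<times> 'b::finite) set) = (\<Sum>a\<in>UNIV. \<Sum>b\<in>UNIV. f (a,b))"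
  proof -
  have "(\<Sum>a\<in>UNIV. \<Sum>b\<in>UNIV. f (a,b)) = (\<Sum>p\<in>UNIV\<times>UNIV. f p)" by (simp add: sum.cartesian_product)
  then show ?thesis by simp
qed
lemma sum22: "sum f (UNIV::(2\<times>2) set) = f (0,0) + f (0,1) + f (1,0) + f (1,1)"
  by (simp add: sum_pair sum2 add.assoc)
lemma sum13: "sum f {1..3::nat} = f 1 + f 2 + f 3"
proof - have "{1..3::nat} = {1,2,3}" by auto then show ?thesis by (simp add: add.assoc) qed

definition cin :: "complex^'n \<Rightarrow> complex^'n \<Rightarrow> complex" where
  "cin x y = (\<Sum>i\<in>UNIV. cnj (x$i) * y$i)"

lemma cin_cnj: "cnj (cin x y) = cin y x"
  by (simp add: cin_def mult.commute)

lemma cin_adj: "cin (A *v x) y = cin x (cadj A *v y)"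
proof -
  have "cin (A *v x) y = (\<Sum>i\<in>UNIV. \<Sum>j\<in>UNIV. cnj (A$i$j) * cnj (x$j) * y$i)"
    by (simp add: cin_def matrix_vector_mult_def sum_distrib_right)
  also have "\<dots> = (\<Sum>j\<in>UNIV. \<Sum>i\<in>UNIV. cnj (A$i$j) * cnj (x$j) * y$i)" by (rule sum.swap)
  also have "\<dots> = cin x (cadj A *v y)"
    by (simp add: cin_def matrix_vector_mult_def cadj_def sum_distrib_left mult_ac)
  finally show ?thesis .
qed

lemma cadj_mult: "cadj (A ** B) = cadj B ** cadj A"
  by (simp add: cadj_def matrix_matrix_mult_def vec_eq_iff mult.commute)

lemma cadj_cadj: "cadj (cadj A) = A" by (simp add: cadj_def vec_eq_iff)

lemma unitary_cin: "unitary_mat U \<Longrightarrow> cin (U *v x) (U *v y) = cin x y"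
  by (simp add: cin_adj unitary_mat_def matrix_vector_mul_assoc)

lemma unitary_mult: "unitary_mat U \<Longrightarrow> unitary_mat V \<Longrightarrow> unitary_mat (U ** V)"
  unfolding unitary_mat_def cadj_mult
  by (metis matrix_mul_assoc matrix_mul_lid matrix_mul_rid)

lemma outer_conj: "A ** outer x ** cadj A = outer (A *v x)"
  unfolding outer_def matrix_matrix_mult_def matrix_vector_mult_def cadj_def
  by (simp add: vec_eq_iff sum_distrib_left sum_distrib_right mult_ac)

lemma mtrace_outer: "mtrace (outer x ** K) = cin x (K *v x)"
proof -
  have "mtrace (outer x ** K) = (\<Sum>i\<in>UNIV. \<Sum>j\<in>UNIV. x$i * cnj (x$j) * K$j$i)"
    by (simp add: mtrace_def outer_def matrix_matrix_mult_def)
  also have "\<dots> = (\<Sum>j\<in>UNIV. \<Sum>i\<in>UNIV. x$i * cnj (x$j) * K$j$i)" by (rule sum.swap)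
  also have "\<dots> = cin x (K *v x)"
    by (simp add: cin_def matrix_vector_mult_def sum_distrib_left mult_ac)
  finally show ?thesis .
qed

lemma mtrace_add: "mtrace ((A + B) ** K) = mtrace (A ** K) + mtrace (B ** K)"
  by (simp add: mtrace_def matrix_matrix_mult_def sum.distrib distrib_right)

lemma cin_self: "cin x x = complex_of_real (\<Sum>i\<in>UNIV. (cmod (x$i))\<^sup>2)"
proof -
  have "\<And>i. cnj (x$i) * x$i = complex_of_real ((cmod (x$i))\<^sup>2)" by (metis complex_norm_square mult.commute)
  then have "cin x x = (\<Sum>i\<in>UNIV. complex_of_real ((cmod (x$i))\<^sup>2))" unfolding cin_def by presburger
  then show ?thesis by (simp only: of_real_sum)
qed

lemma cin_self_real: "cnj (cin x x) = cin x x"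
  by (simp add: cin_cnj)

lemma cin_zero: "cin x x = 0 \<Longrightarrow> x = 0"
proof -
  assume "cin x x = 0"
  then have "(\<Sum>i\<in>UNIV. (cmod (x$i))\<^sup>2) = 0" unfolding cin_self by (simp only: of_real_eq_0_iff)
  then have "\<forall>i\<in>UNIV. (cmod (x$i))\<^sup>2 = 0" by (subst sum_nonneg_eq_0_iff[symmetric]) auto
  then show "x = 0" by (simp add: vec_eq_iff)
qed

lemma cin_smult_l: "cin (c *s x) y = cnj c * cin x y"
  by (simp add: cin_def sum_distrib_left mult_ac)
lemma cin_smult_r: "cin x (c *s y) = c * cin x y"
  by (simp add: cin_def sum_distrib_left mult_ac)
lemma cin_diff_l: "cin (x - y) z = cin x z - cin y z"
  by (simp add: cin_def sum_subtractf left_diff_distrib)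
lemma cin_diff_r: "cin z (x - y) = cin z x - cin z y"
  by (simp add: cin_def sum_subtractf right_diff_distrib)
lemma cin_add_l: "cin (x + y) z = cin x z + cin y z"
  by (simp add: cin_def sum.distrib distrib_right)
lemma cin_add_r: "cin z (x + y) = cin z x + cin z y"
  by (simp add: cin_def sum.distrib distrib_left)
lemma mulv_smult:
  fixes A :: "complex^'n^'m"
  shows "A *v (c *s x) = c *s (A *v x)"
  unfolding matrix_vector_mult_def vector_scalar_mult_def
  by (simp add: vec_eq_iff sum_distrib_left mult.left_commute)

lemma delta_sum: "(\<Sum>j\<in>(UNIV::'n::finite set). (if i = j then 1 else 0) * (f j :: complex)) = f i"
proof -
  have eq: "(\<lambda>j. (if i = j then 1 else 0) * f j) = (\<lambda>j. if i = j then f j else 0)" by auto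
  show ?thesis unfolding eq by simp
qed

definition hh :: "complex^'n \<Rightarrow> complex^'n^'n" where
  "hh x = (\<chi> i j. (if i = j then 1 else 0) - (2 / cin x x) * (x$i * cnj (x$j)))"

lemma hh_mulv: "hh x *v y = y - (2 / cin x x * cin x y) *s x"
proof -
  define c where "c = 2 / cin x x"
  have hd: "hh x = (\<chi> i j. (if i = j then 1 else 0) - c * (x$i * cnj (x$j)))"
    by (simp add: hh_def c_def)
  have "(hh x *v y) $ i = y $ i - (c * cin x y) * x $ i" for i
  proof -
    have "(hh x *v y) $ i = (\<Sum>j\<in>UNIV. (if i = j then 1 else 0) * y$j - (c * x$i) * (cnj (x$j) * y$j))"
      unfolding hd matrix_vector_mult_def by (simp add: left_diff_distrib mult.assoc)
    also have "\<dots> = (\<Sum>j\<in>UNIV. (if i = j then 1 else 0) * y$j) - (c * x$i) * (\<Sum>j\<in>UNIV. cnj (x$j) * y$j)"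
      by (simp only: sum_subtractf sum_distrib_left)
    also have "\<dots> = y $ i - (c * x$i) * cin x y"
      by (simp only: delta_sum cin_def)
    finally show ?thesis by (simp add: mult_ac)
  qed
  then show ?thesis by (simp add: vec_eq_iff c_def)
qed

lemma hh_herm: "cadj (hh x) = hh x"
proof -
  have "cnj (2 / cin x x) = 2 / cin x x" using cin_self_real[of x] by simp
  then show ?thesis by (simp add: hh_def cadj_def vec_eq_iff mult_ac)
qed

lemma delta_sum2: "(\<Sum>k\<in>(UNIV::'n::finite set). (f k :: complex) * (if k = j then 1 else 0)) = f j"
proof -
  have eq: "(\<lambda>k. f k * (if k = j then 1 else 0)) = (\<lambda>k. if k = j then f k else 0)" by auto
  show ?thesis unfolding eq by simp
qed

lemma hh_sq: "hh x ** hh x = mat 1"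
proof -
  define c where "c = 2 / cin x x"
  have hd: "hh x = (\<chi> i j. (if i = j then 1 else 0) - c * (x$i * cnj (x$j)))"
    by (simp add: hh_def c_def)
  have cc: "c * c * cin x x = 2 * c"
    by (cases "cin x x = 0") (simp_all add: c_def field_simps power2_eq_square)
  have "(hh x ** hh x) $ i $ j = (if i = j then 1 else 0)" for i j
  proof -
    have e1: "\<And>k. ((if i = k then 1 else 0) - c * (x$i * cnj (x$k))) * ((if k = j then 1 else 0) - c * (x$k * cnj (x$j)))
      = (if i = k then 1 else 0) * (if k = j then 1 else 0) - (if i = k then 1 else 0) * (c * (x$k * cnj (x$j)))
        - (c * (x$i * cnj (x$k))) * (if k = j then 1 else 0) + (c * c * x$i * cnj (x$j)) * (cnj (x$k) * x$k)"
      by (simp add: algebra_simps)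
    have "(hh x ** hh x) $ i $ j = (\<Sum>k\<in>UNIV. ((if i = k then 1 else 0) - c * (x$i * cnj (x$k))) *
        ((if k = j then 1 else 0) - c * (x$k * cnj (x$j))))"
      unfolding hd matrix_matrix_mult_def by simp
    also have "\<dots> = (\<Sum>k\<in>UNIV. (if i = k then 1 else 0) * (if k = j then 1 else 0))
        - (\<Sum>k\<in>UNIV. (if i = k then 1 else 0) * (c * (x$k * cnj (x$j))))
        - (\<Sum>k\<in>UNIV. (c * (x$i * cnj (x$k))) * (if k = j then 1 else 0))
        + (\<Sum>k\<in>UNIV. (c * c * x$i * cnj (x$j)) * (cnj (x$k) * x$k))"
      by (simp only: e1 sum.distrib sum_subtractf)
    also have "\<dots> = (if i = j then 1 else 0) - c * (x$i * cnj (x$j)) - c * (x$i * cnj (x$j))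
        + c * c * x$i * cnj (x$j) * cin x x"
      by (simp only: delta_sum delta_sum2 sum_distrib_left[symmetric] cin_def)
    also have "\<dots> = (if i = j then 1 else 0)"
    proof -
      have "c * c * x$i * cnj (x$j) * cin x x = (2 * c) * (x$i * cnj (x$j))"
        by (simp only: cc[symmetric]) (simp add: mult_ac)
      then show ?thesis by simp
    qed
    finally show ?thesis .
  qed
  then show ?thesis by (simp add: vec_eq_iff mat_def)
qed

lemma hh_unitary: "unitary_mat (hh x)"
  by (simp add: unitary_mat_def hh_herm hh_sq)

lemma hh_fix: "cin x w = 0 \<Longrightarrow> hh x *v w = w"
  by (simp add: hh_mulv)

lemma hh_map:
  assumes "cin y y = cin e e" "cnj (cin e y) = cin e y"
  shows "hh (y - e) *v y = e"
proof -
  define x where "x = y - e"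
  have ye: "cin y e = cin e y" using assms(2) cin_cnj[of e y] by simp
  have "cin x x = 2 * cin x y"
    using assms(1) ye by (simp add: x_def cin_diff_l cin_diff_r algebra_simps)
  show ?thesis
  proof (cases "cin x x = 0")
    case True
    then have "x = 0" by (rule cin_zero)
    then show ?thesis by (simp add: x_def hh_mulv cin_def)
  next
    case False
    then have "2 / cin x x * cin x y = 1" using \<open>cin x x = 2 * cin x y\<close> by (simp add: field_simps)
    then show ?thesis by (simp add: x_def[symmetric] hh_mulv) (simp add: x_def)
  qed
qed

lemma phase_exists: "\<exists>p. cmod p = 1 \<and> cnj (p * a) = p * a"
proof (cases "a = 0")
  case True then show ?thesis by (intro exI[of _ 1]) simp
next
  case False
  define p where "p = cnj a / complex_of_real (cmod a)"
  have pn: "cmod p = 1" using False by (simp add: p_def norm_divide)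
  have aa: "a * cnj a = complex_of_real (cmod a) * complex_of_real (cmod a)"
    by (metis complex_norm_square of_real_mult power2_eq_square)
  have "p * a = complex_of_real (cmod a)"
    using False aa by (simp add: p_def field_simps)
  then show ?thesis using pn by (intro exI[of _ p]) simp
qed

lemma unit_cnj: "cmod p = 1 \<Longrightarrow> cnj p * p = 1"
  by (metis complex_norm_square mult.commute of_real_1 one_power2)

lemma two_frame:
  fixes y1 y2 e1 e2 :: "complex^'n"
  assumes "cin y1 y1 = 1" "cin y2 y2 = 1" "cin y1 y2 = 0"
    "cin e1 e1 = 1" "cin e2 e2 = 1" "cin e1 e2 = 0"
  shows "\<exists>U w1 w2. unitary_mat U \<and> cmod w1 = 1 \<and> cmod w2 = 1 \<and> U *v y1 = w1 *s e1 \<and> U *v y2 = w2 *s e2"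
proof -
  obtain p1 where p1: "cmod p1 = 1" "cnj (p1 * cin e1 y1) = p1 * cin e1 y1" using phase_exists by blast
  define y1' where "y1' = p1 *s y1"
  have pp1: "cnj p1 * p1 = 1" using p1 unit_cnj by blast
  have pp1': "p1 * cnj p1 = 1" using pp1 by (simp add: mult.commute)
  have y1n: "cin y1' y1' = cin e1 e1" using assms pp1 pp1' by (simp add: y1'_def cin_smult_l cin_smult_r mult.assoc)
  have y1r: "cnj (cin e1 y1') = cin e1 y1'" using p1 by (simp add: y1'_def cin_smult_r)
  define H1 where "H1 = hh (y1' - e1)"
  have H1y: "H1 *v y1' = e1" unfolding H1_def by (rule hh_map[OF y1n y1r])
  define z where "z = H1 *v y2"
  have H1u: "unitary_mat H1" by (simp add: H1_def hh_unitary)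
  have "cin e1 z = cin (H1 *v y1') (H1 *v y2)" by (simp add: H1y z_def)
  also have "\<dots> = cin y1' y2" by (rule unitary_cin[OF H1u])
  also have "\<dots> = 0" by (simp add: y1'_def cin_smult_l assms(3))
  finally have ez: "cin e1 z = 0" .
  have zz: "cin z z = 1" using unitary_cin[OF H1u, of y2 y2] assms(2) by (simp add: z_def)
  obtain p2 where p2: "cmod p2 = 1" "cnj (p2 * cin e2 z) = p2 * cin e2 z" using phase_exists by blast
  have pp2: "cnj p2 * p2 = 1" using p2 unit_cnj by blast
  have pp2': "p2 * cnj p2 = 1" using pp2 by (simp add: mult.commute)
  define z' where "z' = p2 *s z"
  have z'n: "cin z' z' = cin e2 e2" using assms zz pp2 pp2' by (simp add: z'_def cin_smult_l cin_smult_r mult.assoc)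
  have z'r: "cnj (cin e2 z') = cin e2 z'" using p2 by (simp add: z'_def cin_smult_r)
  define H2 where "H2 = hh (z' - e2)"
  have H2z: "H2 *v z' = e2" unfolding H2_def by (rule hh_map[OF z'n z'r])
  have ze1: "cin z e1 = 0" using ez cin_cnj[of e1 z] by simp
  have e21: "cin e2 e1 = 0" using assms(6) cin_cnj[of e1 e2] by simp
  have H2e: "H2 *v e1 = e1" unfolding H2_def
    by (rule hh_fix) (simp add: z'_def cin_diff_l cin_smult_l ze1 e21)
  have H2u: "unitary_mat H2" by (simp add: H2_def hh_unitary)
  have y1eq: "y1 = cnj p1 *s y1'" using pp1 by (simp add: y1'_def vec_eq_iff mult.assoc[symmetric])
  have zeq: "z = cnj p2 *s z'" using pp2 by (simp add: z'_def vec_eq_iff mult.assoc[symmetric])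
  have "(H2 ** H1) *v y1 = cnj p1 *s e1"
    by (simp add: matrix_vector_mul_assoc[symmetric] y1eq mulv_smult H1y H2e)
  moreover have "(H2 ** H1) *v y2 = cnj p2 *s e2"
    by (simp add: matrix_vector_mul_assoc[symmetric] z_def[symmetric] zeq mulv_smult H2z)
  moreover have "unitary_mat (H2 ** H1)" by (rule unitary_mult[OF H2u H1u])
  ultimately show ?thesis using p1 p2
    by (intro exI[of _ "H2 ** H1"] exI[of _ "cnj p1"] exI[of _ "cnj p2"]) simp
qed

definition hsi :: "complex^'n^'m \<Rightarrow> complex^'n^'m \<Rightarrow> complex" where
  "hsi X Y = (\<Sum>x\<in>UNIV. \<Sum>y\<in>UNIV. X$x$y * cnj (Y$x$y))"
definition hsn :: "complex^'n^'m \<Rightarrow> real" where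
  "hsn X = (\<Sum>x\<in>UNIV. \<Sum>y\<in>UNIV. (cmod (X$x$y))\<^sup>2)"

lemma hsi_hsn: "hsi X X = complex_of_real (hsn X)"
proof -
  have "\<And>x y. X$x$y * cnj (X$x$y) = complex_of_real ((cmod (X$x$y))\<^sup>2)" by (metis complex_norm_square)
  then show ?thesis unfolding hsi_def hsn_def by (simp only: of_real_sum)
qed

lemma hsi_add_l: "hsi (X + Y) Z = hsi X Z + hsi Y Z"
  by (simp add: hsi_def sum.distrib distrib_right)
lemma hsi_add_r: "hsi Z (X + Y) = hsi Z X + hsi Z Y"
  by (simp add: hsi_def sum.distrib distrib_left)

lemma CS1: "cmod (\<Sum>x\<in>A. f x * g x) \<le> sqrt (\<Sum>x\<in>A. (cmod (f x))\<^sup>2) * sqrt (\<Sum>x\<in>A. (cmod (g x))\<^sup>2)"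
proof -
  have "cmod (\<Sum>x\<in>A. f x * g x) \<le> (\<Sum>x\<in>A. cmod (f x) * cmod (g x))"
    by (metis (no_types, lifting) norm_mult norm_sum sum.cong)
  also have "\<dots> = (\<Sum>x\<in>A. \<bar>cmod (f x)\<bar> * \<bar>cmod (g x)\<bar>)" by simp
  also have "\<dots> \<le> L2_set (\<lambda>x. cmod (f x)) A * L2_set (\<lambda>x. cmod (g x)) A" by (rule L2_set_mult_ineq)
  finally show ?thesis by (simp add: L2_set_def)
qed

lemma CS2: "cmod (\<Sum>x\<in>UNIV. \<Sum>y\<in>UNIV. X$x$y * Y$x$y) \<le> sqrt (hsn X) * sqrt (hsn Y)"
proof -
  have e1: "(\<Sum>x\<in>UNIV. \<Sum>y\<in>UNIV. X$x$y * Y$x$y) = (\<Sum>p\<in>UNIV. X$fst p$snd p * Y$fst p$snd p)"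
    by (subst sum_pair) simp
  have e2: "hsn X = (\<Sum>p\<in>UNIV. (cmod (X$fst p$snd p))\<^sup>2)" unfolding hsn_def by (subst sum_pair) simp
  have e3: "hsn Y = (\<Sum>p\<in>UNIV. (cmod (Y$fst p$snd p))\<^sup>2)" unfolding hsn_def by (subst sum_pair) simp
  show ?thesis unfolding e1 e2 e3 by (rule CS1)
qed

lemma cin_mulv: "cin a (K *v a) = (\<Sum>x\<in>UNIV. \<Sum>y\<in>UNIV. (cnj (a$x) * a$y) * K$x$y)"
  by (simp add: cin_def matrix_vector_mult_def sum_distrib_left mult_ac)

lemma prod_sum: "(\<Sum>x\<in>A. \<Sum>y\<in>B. (F x :: complex) * G y) = (\<Sum>x\<in>A. F x) * (\<Sum>y\<in>B. G y)"
  by (simp add: sum_product)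

lemma pauli_simps: "pauli 0 = sx" "pauli 1 = sy" "pauli 2 = sz" by (simp_all add: pauli_def)

lemma pd:
  "pdot w $ 0 $ 0 = complex_of_real (w$2)"
  "pdot w $ 1 $ 1 = - complex_of_real (w$2)"
  "pdot w $ 0 $ 1 = complex_of_real (w$0) - \<i> * complex_of_real (w$1)"
  "pdot w $ 1 $ 0 = complex_of_real (w$0) + \<i> * complex_of_real (w$1)"
  unfolding pdot_def sum3 pauli_simps sx_def sy_def sz_def by simp_all

lemma mtrace_pdot: "mtrace (pdot w) = 0"
  unfolding mtrace_def sum2 pd by simp

lemma mtrace_kron: "mtrace (kron A B) = mtrace A * mtrace B"
  unfolding mtrace_def kron_def by (simp add: sum_pair sum_product)

lemma hsi_pdot: "hsi (pdot u) (pdot u') = 2 * complex_of_real (u \<bullet> u')"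
  unfolding hsi_def sum2 pd inner_vec_def sum3
  by (simp add: algebra_simps)

lemma hsi_kron: "hsi (kron A B) (kron A' B') = hsi A A' * hsi (B::complex^2^2) (B'::complex^2^2)"
  for A A' :: "complex^2^2"
  unfolding hsi_def kron_def sum22 sum2 by (simp add: algebra_simps)

lemma hsi_diff_l: "hsi (X - Y) Z = hsi X Z - hsi Y Z"
  by (simp add: hsi_def sum_subtractf left_diff_distrib)
lemma hsi_diff_r: "hsi Z (X - Y) = hsi Z X - hsi Z Y"
  by (simp add: hsi_def sum_subtractf right_diff_distrib)

lemma delta_l: "(\<Sum>y\<in>(UNIV::'n::finite set). (if x = y then c else 0) * (f y::complex)) = c * f x"
proof -
  have eq: "(\<lambda>y. (if x = y then c else 0) * f y) = (\<lambda>y. if x = y then c * f y else 0)" by auto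
  show ?thesis unfolding eq by simp
qed
lemma delta_r: "(\<Sum>y\<in>(UNIV::'n::finite set). (f y::complex) * (if x = y then c else 0)) = f x * c"
proof -
  have eq: "(\<lambda>y. f y * (if x = y then c else 0)) = (\<lambda>y. if x = y then f y * c else 0)" by auto
  show ?thesis unfolding eq by simp
qed

lemma card22: "CARD(2\<times>2) = 4" by simp

lemma bound:
  fixes a b :: "complex^(2\<times>2)" and u v :: "nat \<Rightarrow> real^3"
  assumes aa: "cin a a = 1/2" and bb: "cin b b = 1/2" and ab: "cin a b = 0"
    and un: "\<forall>i\<in>{1..3}. norm (u i) = 1"
    and vo: "\<forall>i\<in>{1..3}. \<forall>j\<in>{1..3}. v i \<bullet> v j = (if i = j then 1 else 0)"
  shows "cmod (\<Sum>i=1..3. cin a (kron (pdot (u i)) (pdot (v i)) *v a) + cin b (kron (pdot (u i)) (pdot (v i)) *v b)) \<le> sqrt 3"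
proof -
  define K where "K i = kron (pdot (u i)) (pdot (v i))" for i
  define W where "W = K 1 + K 2 + K 3"
  define P :: "complex^(2\<times>2)^(2\<times>2)" where "P = (\<chi> x y. cnj (a$x) * a$y + cnj (b$x) * b$y)"
  define D :: "complex^(2\<times>2)^(2\<times>2)" where "D = (\<chi> x y. if x = y then 1/4 else 0)"
  have ba: "cin b a = 0" using ab cin_cnj[of a b] by simp
  have s1: "(\<Sum>i=1..3. cin a (K i *v a) + cin b (K i *v b)) = (\<Sum>x\<in>UNIV. \<Sum>y\<in>UNIV. P$x$y * W$x$y)"
    unfolding sum13 cin_mulv P_def W_def
    by (simp add: sum.distrib[symmetric] algebra_simps)
  have trK: "mtrace (K i) = 0" for i by (simp add: K_def mtrace_kron mtrace_pdot)
  have s2: "(\<Sum>x\<in>UNIV. \<Sum>y\<in>UNIV. D$x$y * W$x$y) = 0"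
  proof -
    have "(\<Sum>x\<in>UNIV. \<Sum>y\<in>UNIV. D$x$y * W$x$y) = (\<Sum>x\<in>UNIV. (1/4) * W$x$x)"
      unfolding D_def by (simp only: vec_lambda_beta delta_l)
    also have "\<dots> = (1/4) * (\<Sum>x\<in>UNIV. W$x$x)" by (simp only: sum_distrib_left)
    also have "(\<Sum>x\<in>UNIV. W$x$x) = mtrace (K 1) + mtrace (K 2) + mtrace (K 3)"
      unfolding W_def mtrace_def by (simp add: sum.distrib)
    finally show ?thesis by (simp add: trK)
  qed
  have s3: "(\<Sum>i=1..3. cin a (K i *v a) + cin b (K i *v b)) = (\<Sum>x\<in>UNIV. \<Sum>y\<in>UNIV. (P - D)$x$y * W$x$y)"
    using s1 s2 by (simp add: left_diff_distrib sum_subtractf)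
  have hPP: "hsi P P = 1/2"
  proof -
    have "hsi P P = (\<Sum>x\<in>UNIV. \<Sum>y\<in>UNIV. (cnj (a$x) * a$x) * (a$y * cnj (a$y)) + (cnj (a$x) * b$x) * (a$y * cnj (b$y))
       + (cnj (b$x) * a$x) * (b$y * cnj (a$y)) + (cnj (b$x) * b$x) * (b$y * cnj (b$y)))"
      unfolding hsi_def P_def by (simp add: algebra_simps)
    also have "\<dots> = cin a a * cin a a + cin a b * cin b a + cin b a * cin a b + cin b b * cin b b"
      by (simp only: sum.distrib prod_sum) (simp add: cin_def mult.commute)
    finally show ?thesis using aa bb ab ba by simp
  qed
  have "(\<Sum>x\<in>UNIV. P$x$x) = cin a a + cin b b"
    unfolding P_def cin_def by (simp add: sum.distrib)
  then have trP: "(\<Sum>x\<in>UNIV. P$x$x) = 1" using aa bb by simp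
  have Dc: "\<And>x y. cnj (D$x$y) = D$x$y" by (simp add: D_def)
  have hPD: "hsi P D = 1/4"
  proof -
    have "hsi P D = (\<Sum>x\<in>UNIV. P$x$x * (1/4))"
      unfolding hsi_def Dc unfolding D_def by (simp only: vec_lambda_beta delta_r)
    also have "\<dots> = (\<Sum>x\<in>UNIV. P$x$x) * (1/4)" by (simp only: sum_distrib_right)
    finally show ?thesis using trP by simp
  qed
  have hDP: "hsi D P = 1/4"
  proof -
    have "hsi D P = (\<Sum>x\<in>UNIV. (1/4) * cnj (P$x$x))"
      unfolding hsi_def unfolding D_def by (simp only: vec_lambda_beta delta_l)
    also have "\<dots> = (1/4) * cnj (\<Sum>x\<in>UNIV. P$x$x)" by (simp only: sum_distrib_left cnj_sum)
    finally show ?thesis using trP by simp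
  qed
  have hDD: "hsi D D = 1/4"
  proof -
    have "hsi D D = (\<Sum>x\<in>(UNIV::(2\<times>2) set). 1/16)"
      unfolding hsi_def D_def by (simp add: if_distrib cong: if_cong)
    then show ?thesis by simp
  qed
  have hR: "hsn (P - D) = 1/4"
  proof -
    have "complex_of_real (hsn (P - D)) = 1/4"
      unfolding hsi_hsn[symmetric] hsi_diff_l hsi_diff_r hPP hPD hDP hDD by simp
    then show ?thesis by (metis of_real_divide of_real_eq_iff of_real_numeral of_real_1)
  qed
  have ip: "hsi (K i) (K j) = 4 * complex_of_real ((u i \<bullet> u j) * (v i \<bullet> v j))" for i j
    by (simp add: K_def hsi_kron hsi_pdot)
  have uu: "u i \<bullet> u i = 1" if "i \<in> {1..3}" for i
    using un that by (metis norm_eq_sqrt_inner real_sqrt_eq_1_iff)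
  have hW: "hsn W = 12"
  proof -
    have "complex_of_real (hsn W) = 12"
      unfolding hsi_hsn[symmetric] W_def hsi_add_l hsi_add_r ip
      using vo uu by simp
    then show ?thesis by (metis of_real_eq_iff of_real_numeral)
  qed
  have "cmod (\<Sum>i=1..3. cin a (K i *v a) + cin b (K i *v b)) \<le> sqrt (hsn (P - D)) * sqrt (hsn W)"
    unfolding s3 by (rule CS2)
  also have "\<dots> = sqrt 3"
    by (simp add: hR hW real_sqrt_mult[symmetric])
  finally show ?thesis by (simp add: K_def)
qed

definition sq2 :: real where "sq2 = sqrt (1/2)"
definition sq6 :: real where "sq6 = sqrt (1/6)"
definition sq3 :: real where "sq3 = sqrt (1/3)"
lemma sq_facts: "sq2 * sq2 = 1/2" "sq6 * sq6 = 1/6" "sq3 * sq3 = 1/3"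
  by (simp_all add: sq2_def sq6_def sq3_def)
lemma sq_facts2: "sq2 * (sq2 * x) = x/2" "sq6 * (sq6 * x) = x/6" "sq3 * (sq3 * x) = x/3"
  by (simp_all add: mult.assoc[symmetric] sq_facts)

definition vv :: "nat \<Rightarrow> real^3" where
  "vv i = (\<chi> k. if k = 0 then (if i = 1 then sq2 else if i = 2 then - sq2 else 0)
                 else if k = 1 then (if i = 3 then - 2 * sq6 else sq6) else sq3)"
definition uu :: "real \<Rightarrow> real \<Rightarrow> nat \<Rightarrow> real^3" where
  "uu d e i = (\<chi> k. if k = 0 then d * (vv i $ 0) else if k = 1 then - (d * (vv i $ 1)) else e * (vv i $ 2))"

lemma n3: "(0::3) \<noteq> 1" "(0::3) \<noteq> 2" "(1::3) \<noteq> 2" "(1::3) \<noteq> 0" "(2::3) \<noteq> 0" "(2::3) \<noteq> 1" by simp_all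

lemma vv_comp: "vv i $ 0 = (if i = 1 then sq2 else if i = 2 then - sq2 else 0)"
  "vv i $ 1 = (if i = 3 then - 2 * sq6 else sq6)" "vv i $ 2 = sq3"
  by (simp_all add: vv_def n3)
lemma uu_comp: "uu d e i $ 0 = d * (vv i $ 0)" "uu d e i $ 1 = - (d * (vv i $ 1))" "uu d e i $ 2 = e * (vv i $ 2)"
  by (simp_all add: uu_def n3)

lemma vv_orth: "\<forall>i\<in>{1..3}. \<forall>j\<in>{1..3}. vv i \<bullet> vv j = (if i = j then 1 else 0)"
proof -
  have s: "{1..3::nat} = {1,2,3}" by auto
  show ?thesis unfolding s inner_vec_def sum3 vv_comp
    by (simp add: sq_facts sq_facts2 algebra_simps)
qed

lemma uu_norm:
  assumes "2 * d * d + e * e = 3"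
  shows "\<forall>i\<in>{1..3}. norm (uu d e i) = 1"
proof -
  have s: "{1..3::nat} = {1,2,3}" by auto
  have "uu d e i \<bullet> uu d e i = 1" if "i \<in> {1,2,3}" for i
    using that assms unfolding inner_vec_def sum3 uu_comp vv_comp
    by (auto simp: sq_facts sq_facts2 algebra_simps)
  then show ?thesis unfolding s by (simp add: norm_eq_sqrt_inner)
qed

lemma coef1: "(\<Sum>i=1..3. complex_of_real (uu d e i $ 2) * complex_of_real (vv i $ 2)) = complex_of_real e"
proof -
  have "e * sq3 * sq3 + e * sq3 * sq3 + e * sq3 * sq3 = e" by (simp add: mult.assoc sq_facts)
  then show ?thesis unfolding sum13 uu_comp vv_comp
    by (simp only: of_real_mult[symmetric] of_real_add[symmetric] of_real_eq_iff)
qed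

lemma c2_term: "(complex_of_real (d*p) - \<i> * complex_of_real (-(d*q))) * (complex_of_real p - \<i> * complex_of_real q)
   = complex_of_real (d * (p*p + q*q))"
  by (simp add: complex_eq_iff algebra_simps)
lemma c3_term: "(complex_of_real (d*p) + \<i> * complex_of_real (-(d*q))) * (complex_of_real p + \<i> * complex_of_real q)
   = complex_of_real (d * (p*p + q*q))"
  by (simp add: complex_eq_iff algebra_simps)

lemma vv01: "i \<in> {1..3} \<Longrightarrow> vv i $ 0 * vv i $ 0 + vv i $ 1 * vv i $ 1 = 2/3"
proof -
  assume "i \<in> {1..3}"
  then have "i = 1 \<or> i = 2 \<or> i = 3" by auto
  then show ?thesis unfolding vv_comp by (auto simp: sq_facts sq_facts2 algebra_simps)
qed

lemma vv01s: "vv 1 $ 0 * vv 1 $ 0 + vv 1 $ 1 * vv 1 $ 1 = 2/3"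
  "vv 2 $ 0 * vv 2 $ 0 + vv 2 $ 1 * vv 2 $ 1 = 2/3" "vv 3 $ 0 * vv 3 $ 0 + vv 3 $ 1 * vv 3 $ 1 = 2/3"
  by (rule vv01, simp)+

lemma coef2: "(\<Sum>i=1..3. (complex_of_real (uu d e i $ 0) - \<i> * complex_of_real (uu d e i $ 1)) *
     (complex_of_real (vv i $ 0) - \<i> * complex_of_real (vv i $ 1))) = 2 * complex_of_real d"
unfolding sum13 uu_comp c2_term
  by (simp only: vv01s) simp
lemma coef3: "(\<Sum>i=1..3. (complex_of_real (uu d e i $ 0) + \<i> * complex_of_real (uu d e i $ 1)) *
     (complex_of_real (vv i $ 0) + \<i> * complex_of_real (vv i $ 1))) = 2 * complex_of_real d"
unfolding sum13 uu_comp c3_term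
  by (simp only: vv01s) simp

lemma cin_sparse:
  fixes \<psi> :: "complex^(2\<times>2)" and A B :: "complex^2^2"
  assumes "\<psi>$(0,1) = 0" "\<psi>$(1,0) = 0"
  shows "cin \<psi> (kron A B *v \<psi>) = cnj (\<psi>$(0,0)) * (A$0$0*B$0$0*\<psi>$(0,0) + A$0$1*B$0$1*\<psi>$(1,1))
     + cnj (\<psi>$(1,1)) * (A$1$0*B$1$0*\<psi>$(0,0) + A$1$1*B$1$1*\<psi>$(1,1))"
  by (simp add: cin_mulv sum22 kron_def algebra_simps assms)

lemma sum_form: "(\<Sum>i\<in>A. cnj x * (p i * x + q i * y) + cnj y * (r i * x + s i * y))
   = cnj x * ((\<Sum>i\<in>A. p i) * x + (\<Sum>i\<in>A. q i) * y) + cnj y * ((\<Sum>i\<in>A. r i) * x + (\<Sum>i\<in>A. s i) * y)"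
  by (simp add: sum.distrib sum_distrib_left sum_distrib_right algebra_simps)

lemma psi_val:
  fixes \<psi> :: "complex^(2\<times>2)"
  assumes "\<psi>$(0,1) = 0" "\<psi>$(1,0) = 0"
  shows "(\<Sum>i=1..3. cin \<psi> (kron (pdot (uu d e i)) (pdot (vv i)) *v \<psi>))
    = complex_of_real e * (cnj (\<psi>$(0,0)) * \<psi>$(0,0) + cnj (\<psi>$(1,1)) * \<psi>$(1,1))
      + 2 * complex_of_real d * (cnj (\<psi>$(0,0)) * \<psi>$(1,1) + cnj (\<psi>$(1,1)) * \<psi>$(0,0))"
proof -
  have m: "(- complex_of_real a) * (- complex_of_real b) = complex_of_real a * complex_of_real b" for a b by simp
  have "(\<Sum>i=1..3. cin \<psi> (kron (pdot (uu d e i)) (pdot (vv i)) *v \<psi>))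
    = cnj (\<psi>$(0,0)) * (complex_of_real e * \<psi>$(0,0) + 2 * complex_of_real d * \<psi>$(1,1))
      + cnj (\<psi>$(1,1)) * (2 * complex_of_real d * \<psi>$(0,0) + complex_of_real e * \<psi>$(1,1))"
    unfolding cin_sparse[OF assms] pd m sum_form coef1 coef2 coef3 by (rule refl)
  then show ?thesis by (simp add: algebra_simps)
qed

definition eb1 :: "complex^(2\<times>2)" where
  "eb1 = (\<chi> x. if x = (0,0) \<or> x = (1,1) then complex_of_real sq2 else 0)"
definition eb2 :: "complex^(2\<times>2)" where
  "eb2 = (\<chi> x. if x = (0,0) then complex_of_real sq2 else if x = (1,1) then - complex_of_real sq2 else 0)"

lemma csq: "complex_of_real sq2 * complex_of_real sq2 = 1/2"
  by (simp only: of_real_mult[symmetric] sq_facts) simp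

lemma eb_cin: "cin eb1 eb1 = 1" "cin eb2 eb2 = 1" "cin eb1 eb2 = 0"
  unfolding cin_def sum22 eb1_def eb2_def by (simp_all add: csq)

lemma psi_comp:
  fixes al be :: complex
  shows "(al *s eb1 + be *s eb2)$(0,1) = 0" "(al *s eb1 + be *s eb2)$(1,0) = 0"
    "(al *s eb1 + be *s eb2)$(0,0) = complex_of_real sq2 * (al + be)"
    "(al *s eb1 + be *s eb2)$(1,1) = complex_of_real sq2 * (al - be)"
  unfolding eb1_def eb2_def by (simp_all add: algebra_simps)

lemma psi_val2:
  fixes al be :: complex
  shows "(\<Sum>i=1..3. cin (al *s eb1 + be *s eb2) (kron (pdot (uu d e i)) (pdot (vv i)) *v (al *s eb1 + be *s eb2)))
    = complex_of_real e * (cnj al * al + cnj be * be) + 2 * complex_of_real d * (cnj al * al - cnj be * be)"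
proof -
  define s where "s = complex_of_real sq2"
  have ss: "s * s = 1/2" using csq by (simp add: s_def)
  have cs: "cnj s = s" by (simp add: s_def)
  have e1: "cnj (s * (al + be)) * (s * (al + be)) + cnj (s * (al - be)) * (s * (al - be))
     = (s * s) * (2 * (cnj al * al + cnj be * be))" using cs by (simp add: algebra_simps)
  have e2: "cnj (s * (al + be)) * (s * (al - be)) + cnj (s * (al - be)) * (s * (al + be))
     = (s * s) * (2 * (cnj al * al - cnj be * be))" using cs by (simp add: algebra_simps)
  show ?thesis
    unfolding psi_val[OF psi_comp(1,2)] psi_comp(3,4) s_def[symmetric] e1 e2 ss by (simp add: algebra_simps)
qed

lemma ineq:
  fixes t :: real
  assumes "0 < t" "t \<le> 1"
  shows "sqrt 3 < sqrt (3 - 2 * t) + 2 * t"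
proof -
  have s3: "3/2 < sqrt 3" by (rule real_less_rsqrt) (simp add: power2_eq_square)
  have sq: "sqrt 3 * sqrt 3 = 3" by simp
  have h: "4*t - 4 * sqrt 3 + 2 < 0" using assms s3 by linarith
  have "t * (4*t - 4 * sqrt 3 + 2) < 0" using assms(1) h by (rule mult_pos_neg)
  then have "(sqrt 3 - 2 * t)\<^sup>2 < 3 - 2 * t"
    by (simp add: power2_eq_square algebra_simps sq)
  then have "sqrt 3 - 2 * t < sqrt (3 - 2 * t)" by (rule real_less_rsqrt)
  then show ?thesis by simp
qed

definition Jop :: "complex^(2\<times>2) \<Rightarrow> complex^(2\<times>2)" where
  "Jop y = (\<chi> p. if snd p = 0 then - cnj (y$(fst p,1)) else cnj (y$(fst p,0)))"

lemma Jop_cin: "cin y (Jop y) = 0" "cin (Jop y) (Jop y) = cin y y"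
  unfolding cin_def sum22 Jop_def by (simp_all add: algebra_simps)

lemma cin_real: "cin x x = complex_of_real (Re (cin x x))"
  by (simp add: cin_self)
lemma cin_nonneg: "0 \<le> Re (cin x x)"
  by (simp add: cin_self sum_nonneg)

lemma smult_smult: "a *s (b *s (x::complex^'n)) = (a * b) *s x"
  by (simp add: vec_eq_iff mult.assoc)
lemma smult_add: "(a::complex) *s (x + y) = a *s x + a *s (y::complex^'n)"
  by (simp add: vec_eq_iff distrib_left)
lemma mulv_add: "(A::complex^'n^'m) *v (x + y) = A *v x + A *v y"
  by (simp add: matrix_vector_mult_def vec_eq_iff distrib_left sum.distrib)

lemma gs:
  fixes \<phi> \<xi> :: "complex^(2\<times>2)" and p q :: real
  assumes pp: "cin \<phi> \<phi> = complex_of_real p" and qq: "cin \<xi> \<xi> = complex_of_real q"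
    and pq: "p + q = 1" and qp: "q \<le> p" and nd: "\<not> (p = 1/2 \<and> cin \<phi> \<xi> = 0)"
  shows "\<exists>U a0 b0 a1 b1. unitary_mat U \<and> U *v \<phi> = a0 *s eb1 + b0 *s eb2 \<and> U *v \<xi> = a1 *s eb1 + b1 *s eb2
     \<and> (cmod a0)\<^sup>2 + (cmod b0)\<^sup>2 + (cmod a1)\<^sup>2 + (cmod b1)\<^sup>2 = 1
     \<and> 0 < (cmod a0)\<^sup>2 + (cmod a1)\<^sup>2 - (cmod b0)\<^sup>2 - (cmod b1)\<^sup>2"
proof -
  have p0: "0 < p" using pq qp by linarith
  define sp where "sp = sqrt p"
  have sp0: "0 < sp" using p0 by (simp add: sp_def)
  have spsp: "sp * sp = p" using p0 by (simp add: sp_def)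
  define g where "g = cin \<phi> \<xi>"
  have gc: "cin \<xi> \<phi> = cnj g" by (simp add: g_def cin_cnj)
  define y1 where "y1 = (1 / complex_of_real sp) *s \<phi>"
  have y1y1: "cin y1 y1 = 1"
    using sp0 spsp p0 by (simp add: y1_def cin_smult_l cin_smult_r pp of_real_mult[symmetric] del: of_real_mult)
  define r where "r = \<xi> - (g / complex_of_real p) *s \<phi>"
  have phir: "cin \<phi> r = 0" using p0 by (simp add: r_def cin_diff_r cin_smult_r pp g_def)
  have rr: "cin r r = complex_of_real q - g * cnj g / complex_of_real p"
    using p0 by (simp add: r_def cin_diff_r cin_diff_l cin_smult_r cin_smult_l pp qq gc g_def[symmetric] field_simps)
  define nr where "nr = sqrt (Re (cin r r))"
  have nrnr0: "nr * nr = Re (cin r r)" unfolding nr_def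
    using cin_nonneg[of r] by (metis real_sqrt_mult_self abs_of_nonneg)
  have nrnr: "complex_of_real (nr * nr) = cin r r"
    unfolding nrnr0 by (rule cin_real[symmetric])
  have nr0: "0 \<le> nr" using cin_nonneg[of r] by (simp add: nr_def)
  define y2 where "y2 = (if r = 0 then Jop y1 else (1 / complex_of_real nr) *s r)"
  have y2y2: "cin y2 y2 = 1 \<and> cin y1 y2 = 0"
  proof (cases "r = 0")
    case True then show ?thesis using y1y1 Jop_cin[of y1] by (simp add: y2_def)
  next
    case False
    then have "cin r r \<noteq> 0" using cin_zero by blast
    then have "nr \<noteq> 0" using nrnr by auto
    then have "cin y2 y2 = 1"
      using False nrnr[symmetric] by (simp add: y2_def cin_smult_l cin_smult_r)
    moreover have "cin y1 y2 = 0" using False by (simp add: y2_def y1_def cin_smult_l cin_smult_r phir)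
    ultimately show ?thesis by simp
  qed
  have rdec: "r = complex_of_real nr *s y2"
  proof (cases "r = 0")
    case True
    then have "nr = 0" by (simp add: nr_def cin_def)
    then show ?thesis using True by (simp add: vec_eq_iff)
  next
    case False
    then have "cin r r \<noteq> 0" using cin_zero by blast
    then have "nr \<noteq> 0" using nrnr by auto
    then show ?thesis using False by (simp add: y2_def smult_smult)
  qed
  have phidec: "\<phi> = complex_of_real sp *s y1"
    using sp0 by (simp add: y1_def smult_smult)
  have xidec: "\<xi> = (g / complex_of_real sp) *s y1 + complex_of_real nr *s y2"
  proof -
    have "\<xi> = (g / complex_of_real p) *s \<phi> + r" by (simp add: r_def)
    also have "(g / complex_of_real p) *s \<phi> = (g / complex_of_real sp) *s y1"
      using sp0 spsp by (simp add: y1_def smult_smult of_real_mult[symmetric] field_simps del: of_real_mult)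
    finally show ?thesis using rdec by simp
  qed
  obtain U w1 w2 where U: "unitary_mat U" "cmod w1 = 1" "cmod w2 = 1" "U *v y1 = w1 *s eb1" "U *v y2 = w2 *s eb2"
    using two_frame[of y1 y2 eb1 eb2] y1y1 y2y2 eb_cin by blast
  define a0 where "a0 = complex_of_real sp * w1"
  define a1 where "a1 = g / complex_of_real sp * w1"
  define b1 where "b1 = complex_of_real nr * w2"
  have Uphi: "U *v \<phi> = a0 *s eb1 + 0 *s eb2"
    by (subst phidec) (simp add: mulv_smult U(4) smult_smult a0_def vec_eq_iff)
  have Uxi: "U *v \<xi> = a1 *s eb1 + b1 *s eb2"
    by (subst xidec) (simp add: mulv_add mulv_smult U(4,5) smult_smult a1_def b1_def)
  have ca0: "(cmod a0)\<^sup>2 = p" using U(2) sp0 spsp by (simp add: a0_def norm_mult power2_eq_square)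
  have ca1: "(cmod a1)\<^sup>2 = (cmod g)\<^sup>2 / p"
    using U(2) sp0 spsp by (simp add: a1_def norm_mult norm_divide power2_eq_square)
  have gg: "g * cnj g = complex_of_real ((cmod g)\<^sup>2)" by (simp only: complex_norm_square)
  have "complex_of_real (nr * nr) = complex_of_real (q - (cmod g)\<^sup>2 / p)"
    unfolding nrnr rr gg by simp
  then have nn: "nr * nr = q - (cmod g)\<^sup>2 / p" by (simp only: of_real_eq_iff)
  have cb1: "(cmod b1)\<^sup>2 = q - (cmod g)\<^sup>2 / p"
    using U(3) nr0 nn by (simp add: b1_def norm_mult power2_eq_square)
  have "0 < p - q + 2 * (cmod g)\<^sup>2 / p"
  proof (cases "p = q")
    case True
    then have "p = 1/2" using pq by simp
    then have "g \<noteq> 0" using nd by (simp add: g_def)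
    then have "0 < (cmod g)\<^sup>2 / p" using p0 by simp
    then show ?thesis using True by simp
  next
    case False
    then have "0 < p - q" using qp by simp
    moreover have "0 \<le> (cmod g)\<^sup>2 / p" using p0 by simp
    ultimately show ?thesis by simp
  qed
  then show ?thesis using U(1) Uphi Uxi ca0 ca1 cb1 pq
    by (intro exI[of _ U] exI[of _ a0] exI[of _ 0] exI[of _ a1] exI[of _ b1]) simp
qed

lemma matrix_add_rdistrib': "((A::complex^'n^'m) + B) ** C = A ** C + B ** C"
  by (simp add: matrix_matrix_mult_def vec_eq_iff distrib_right sum.distrib)

lemma trace_form:
  fixes U :: "complex^'n^'n"
  shows "mtrace (U ** (outer a + outer b) ** cadj U ** K) = cin (U *v a) (K *v (U *v a)) + cin (U *v b) (K *v (U *v b))"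
proof -
  have "U ** (outer a + outer b) ** cadj U = outer (U *v a) + outer (U *v b)"
    by (simp add: matrix_add_ldistrib matrix_add_rdistrib' outer_conj)
  then show ?thesis by (simp add: mtrace_add mtrace_outer)
qed

lemma violate:
  fixes \<phi> \<xi> :: "complex^(2\<times>2)" and p q :: real
  assumes pp: "cin \<phi> \<phi> = complex_of_real p" and qq: "cin \<xi> \<xi> = complex_of_real q"
    and pq: "p + q = 1" and qp: "q \<le> p" and nd: "\<not> (p = 1/2 \<and> cin \<phi> \<xi> = 0)"
  shows "\<exists>(U::complex^(2\<times>2)^(2\<times>2)) (u::nat \<Rightarrow> real^3) (v::nat \<Rightarrow> real^3).
        unitary_mat U \<and> (\<forall>i\<in>{1..3}. norm (u i) = 1)
        \<and> (\<forall>i\<in>{1..3}. \<forall>j\<in>{1..3}. v i \<bullet> v j = (if i = j then 1 else 0))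
        \<and> 1 < (1 / sqrt 3) * cmod (\<Sum>i=1..3. mtrace (U ** (outer \<phi> + outer \<xi>) ** cadj U ** kron (pdot (u i)) (pdot (v i))))"
proof -
  obtain U a0 b0 a1 b1 where U: "unitary_mat U" "U *v \<phi> = a0 *s eb1 + b0 *s eb2" "U *v \<xi> = a1 *s eb1 + b1 *s eb2"
    and tot: "(cmod a0)\<^sup>2 + (cmod b0)\<^sup>2 + (cmod a1)\<^sup>2 + (cmod b1)\<^sup>2 = 1"
    and pos: "0 < (cmod a0)\<^sup>2 + (cmod a1)\<^sup>2 - (cmod b0)\<^sup>2 - (cmod b1)\<^sup>2"
    using gs[OF pp qq pq qp nd] by blast
  define dl where "dl = (cmod a0)\<^sup>2 + (cmod a1)\<^sup>2 - (cmod b0)\<^sup>2 - (cmod b1)\<^sup>2"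
  have dl0: "0 < dl" using pos by (simp add: dl_def)
  have "0 \<le> (cmod b0)\<^sup>2" "0 \<le> (cmod b1)\<^sup>2" by simp_all
  then have dl1: "dl \<le> 1" using tot unfolding dl_def by linarith
  have t1: "dl * dl \<le> 1" using dl0 dl1 by (metis less_eq_real_def mult_le_one)
  have t0: "0 < dl * dl" using dl0 by simp
  define e where "e = sqrt (3 - 2 * (dl * dl))"
  have ee: "2 * dl * dl + e * e = 3" using t1 by (simp add: e_def)
  have cn: "\<And>z. cnj z * z = complex_of_real ((cmod z)\<^sup>2)" by (metis complex_norm_square mult.commute)
  have val: "(\<Sum>i=1..3. mtrace (U ** (outer \<phi> + outer \<xi>) ** cadj U ** kron (pdot (uu dl e i)) (pdot (vv i))))
      = complex_of_real (e + 2 * (dl * dl))"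
  proof -
    have "(\<Sum>i=1..3. mtrace (U ** (outer \<phi> + outer \<xi>) ** cadj U ** kron (pdot (uu dl e i)) (pdot (vv i))))
      = (\<Sum>i=1..3. cin (a0 *s eb1 + b0 *s eb2) (kron (pdot (uu dl e i)) (pdot (vv i)) *v (a0 *s eb1 + b0 *s eb2)))
      + (\<Sum>i=1..3. cin (a1 *s eb1 + b1 *s eb2) (kron (pdot (uu dl e i)) (pdot (vv i)) *v (a1 *s eb1 + b1 *s eb2)))"
      unfolding trace_form U(2,3) by (simp only: sum.distrib)
    also have "\<dots> = complex_of_real (e * ((cmod a0)\<^sup>2 + (cmod b0)\<^sup>2 + (cmod a1)\<^sup>2 + (cmod b1)\<^sup>2) + 2 * dl * dl)"
      unfolding psi_val2 cn dl_def by (simp add: algebra_simps)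
    finally show ?thesis using tot by simp
  qed
  have e0: "0 \<le> e" using t1 by (simp add: e_def)
  have "sqrt 3 < e + 2 * (dl * dl)" unfolding e_def using ineq[OF t0 t1] by simp
  moreover have "cmod (complex_of_real (e + 2 * (dl * dl))) = e + 2 * (dl * dl)"
    using e0 t0 by (simp only: norm_of_real)
  ultimately have "1 < (1 / sqrt 3) * cmod (complex_of_real (e + 2 * (dl * dl)))"
    by (simp add: field_simps)
  then show ?thesis using U(1) uu_norm[OF ee] vv_orth unfolding val[symmetric]
    by blast
qed

lemma forall2: "(\<forall>i::2. P i) \<longleftrightarrow> P 0 \<and> P 1"
proof -
  have "i = 0 \<or> i = 1" for i :: 2
  proof -
    have "i \<in> {0,1::2}" unfolding U2[symmetric] by simp
    then show ?thesis by blast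
  qed
  then show ?thesis by metis
qed

lemma cadj_add: "cadj ((A::complex^'n^'m) + B) = cadj A + cadj B"
  by (simp add: cadj_def vec_eq_iff)
lemma cadj_outer: "cadj (outer x) = outer x"
  by (simp add: cadj_def outer_def vec_eq_iff mult.commute)

lemma psd_outer: "(\<Sum>i\<in>UNIV. \<Sum>j\<in>UNIV. cnj (v $ i) * outer x $ i $ j * v $ j) = cin v x * cnj (cin v x)"
proof -
  have "(\<Sum>i\<in>UNIV. \<Sum>j\<in>UNIV. cnj (v $ i) * outer x $ i $ j * v $ j)
     = (\<Sum>i\<in>UNIV. \<Sum>j\<in>UNIV. (cnj (v $ i) * x $ i) * (cnj (x $ j) * v $ j))"
    by (simp add: outer_def mult_ac)
  also have "\<dots> = cin v x * cin x v" by (simp only: prod_sum cin_def)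
  finally show ?thesis by (simp add: cin_cnj)
qed

lemma psd_outer2: "0 \<le> Re (\<Sum>i\<in>UNIV. \<Sum>j\<in>UNIV. cnj (v $ i) * (outer a + outer b) $ i $ j * v $ j)"
proof -
  have "(\<Sum>i\<in>UNIV. \<Sum>j\<in>UNIV. cnj (v $ i) * (outer a + outer b) $ i $ j * v $ j)
    = (\<Sum>i\<in>UNIV. \<Sum>j\<in>UNIV. cnj (v $ i) * outer a $ i $ j * v $ j) + (\<Sum>i\<in>UNIV. \<Sum>j\<in>UNIV. cnj (v $ i) * outer b $ i $ j * v $ j)"
    by (simp add: sum.distrib distrib_left distrib_right)
  also have "\<dots> = cin v a * cnj (cin v a) + cin v b * cnj (cin v b)" by (simp only: psd_outer)
  finally show ?thesis by (simp add: complex_norm_square[symmetric] del: of_real_power)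
qed

lemma mtrace_outer2: "mtrace (outer a + outer b) = cin a a + cin b b"
  by (simp add: mtrace_def outer_def cin_def sum.distrib mult.commute)

theorem theorem5:
  fixes \<Upsilon> :: "complex^((2\<times>2)\<times>2)"
  assumes "norm \<Upsilon> = 1"
  shows "ptrace2 (outer \<Upsilon>) \<in> AUS3 \<longleftrightarrow> ptrace1 (outer \<Upsilon>) = maxmixed2"
proof -
  define ph :: "2 \<Rightarrow> complex^(2\<times>2)" where "ph c = (\<chi> x. \<Upsilon> $ (x, c))" for c
  have sig: "ptrace2 (outer \<Upsilon>) = outer (ph 0) + outer (ph 1)"
    by (simp add: ptrace2_def outer_def vec_eq_iff sum2 ph_def)
  have sC: "ptrace1 (outer \<Upsilon>) = (\<chi> c c'. cin (ph c') (ph c))"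
    by (simp add: ptrace1_def outer_def cin_def vec_eq_iff ph_def mult.commute)
  have mm: "ptrace1 (outer \<Upsilon>) = maxmixed2 \<longleftrightarrow>
     cin (ph 0) (ph 0) = 1/2 \<and> cin (ph 1) (ph 1) = 1/2 \<and> cin (ph 0) (ph 1) = 0 \<and> cin (ph 1) (ph 0) = 0"
    unfolding sC maxmixed2_def vec_eq_iff forall2 by auto
  have "(\<Sum>p\<in>UNIV. (cmod (\<Upsilon> $ p))\<^sup>2) = 1"
    using assms by (simp add: norm_vec_def L2_set_def)
  then have "(\<Sum>x\<in>UNIV. (cmod (\<Upsilon> $ (x,0)))\<^sup>2 + (cmod (\<Upsilon> $ (x,1)))\<^sup>2) = 1"
    by (simp add: sum_pair sum2)
  then have s1: "(\<Sum>x\<in>UNIV. (cmod (\<Upsilon> $ (x,0)))\<^sup>2) + (\<Sum>x\<in>UNIV. (cmod (\<Upsilon> $ (x,1)))\<^sup>2) = 1"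
    by (simp only: sum.distrib)
  have "cin (ph 0) (ph 0) + cin (ph 1) (ph 1) = complex_of_real ((\<Sum>x\<in>UNIV. (cmod (\<Upsilon> $ (x,0)))\<^sup>2) + (\<Sum>x\<in>UNIV. (cmod (\<Upsilon> $ (x,1)))\<^sup>2))"
    unfolding cin_self ph_def vec_lambda_beta of_real_add by (rule refl)
  then have nrm: "cin (ph 0) (ph 0) + cin (ph 1) (ph 1) = 1" unfolding s1 by simp
  show ?thesis
  proof
    assume A: "ptrace2 (outer \<Upsilon>) \<in> AUS3"
    show "ptrace1 (outer \<Upsilon>) = maxmixed2"
    proof (rule ccontr)
      assume nmm: "ptrace1 (outer \<Upsilon>) \<noteq> maxmixed2"
      define p where "p = Re (cin (ph 0) (ph 0))"
      define q where "q = Re (cin (ph 1) (ph 1))"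
      have pp: "cin (ph 0) (ph 0) = complex_of_real p" unfolding p_def by (rule cin_real)
      have qq: "cin (ph 1) (ph 1) = complex_of_real q" unfolding q_def by (rule cin_real)
      have "complex_of_real (p + q) = 1" using nrm pp qq by simp
      then have pq: "p + q = 1" by (simp only: of_real_eq_1_iff)
      have cc: "cin (ph 1) (ph 0) = cnj (cin (ph 0) (ph 1))" by (simp add: cin_cnj)
      have Acond: "\<forall>(U::complex^(2\<times>2)^(2\<times>2)) (u::nat \<Rightarrow> real^3) (v::nat \<Rightarrow> real^3).
        unitary_mat U \<and> (\<forall>i\<in>{1..3}. norm (u i) = 1)
        \<and> (\<forall>i\<in>{1..3}. \<forall>j\<in>{1..3}. v i \<bullet> v j = (if i = j then 1 else 0))
        \<longrightarrow> (1 / sqrt 3) * cmod (\<Sum>i=1..3. mtrace (U ** (outer (ph 0) + outer (ph 1)) ** cadj U ** kron (pdot (u i)) (pdot (v i)))) \<le> 1"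
        using A unfolding AUS3_def sig by blast
      show False
      proof (cases "q \<le> p")
        case True
        have nd: "\<not> (p = 1/2 \<and> cin (ph 0) (ph 1) = 0)"
        proof
          assume h: "p = 1/2 \<and> cin (ph 0) (ph 1) = 0"
          then have qh: "q = 1/2" using pq by simp
          have ph: "p = 1/2" using h by simp
          have c1: "cin (ph 1) (ph 1) = 1/2" unfolding qq qh by simp
          have c0: "cin (ph 0) (ph 0) = 1/2" unfolding pp ph by simp
          have c01: "cin (ph 0) (ph 1) = 0" using h by simp
          have c10: "cin (ph 1) (ph 0) = 0" using cc c01 by simp
          have "ptrace1 (outer \<Upsilon>) = maxmixed2" using mm c0 c1 c01 c10 by blast
          then show False using nmm by blast
        qed
        obtain U :: "complex^(2\<times>2)^(2\<times>2)" and u v :: "nat \<Rightarrow> real^3" where Uuv: "unitary_mat U" "\<forall>i\<in>{1..3}. norm (u i) = 1"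
          "\<forall>i\<in>{1..3}. \<forall>j\<in>{1..3}. v i \<bullet> v j = (if i = j then 1 else 0)"
          "1 < (1 / sqrt 3) * cmod (\<Sum>i=1..3. mtrace (U ** (outer (ph 0) + outer (ph 1)) ** cadj U ** kron (pdot (u i)) (pdot (v i))))"
          using violate[OF pp qq pq True nd] by blast
        have "(1 / sqrt 3) * cmod (\<Sum>i=1..3. mtrace (U ** (outer (ph 0) + outer (ph 1)) ** cadj U ** kron (pdot (u i)) (pdot (v i)))) \<le> 1"
          using Acond Uuv(1,2,3) by blast
        then show False using Uuv(4) by linarith
      next
        case False
        have pq': "q + p = 1" using pq by simp
        have nd: "\<not> (q = 1/2 \<and> cin (ph 1) (ph 0) = 0)" using False pq by auto
        have com: "outer (ph 1) + outer (ph 0) = outer (ph 0) + outer (ph 1)" by (simp add: add.commute)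
        have qp': "p \<le> q" using False by simp
        obtain U :: "complex^(2\<times>2)^(2\<times>2)" and u v :: "nat \<Rightarrow> real^3" where Uuv: "unitary_mat U" "\<forall>i\<in>{1..3}. norm (u i) = 1"
          "\<forall>i\<in>{1..3}. \<forall>j\<in>{1..3}. v i \<bullet> v j = (if i = j then 1 else 0)"
          "1 < (1 / sqrt 3) * cmod (\<Sum>i=1..3. mtrace (U ** (outer (ph 1) + outer (ph 0)) ** cadj U ** kron (pdot (u i)) (pdot (v i))))"
          using violate[OF qq pp pq' qp' nd] by blast
        have "(1 / sqrt 3) * cmod (\<Sum>i=1..3. mtrace (U ** (outer (ph 0) + outer (ph 1)) ** cadj U ** kron (pdot (u i)) (pdot (v i)))) \<le> 1"
          using Acond Uuv(1,2,3) by blast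
        then show False using Uuv(4) unfolding com by linarith
      qed
    qed
  next
    assume B: "ptrace1 (outer \<Upsilon>) = maxmixed2"
    then have o: "cin (ph 0) (ph 0) = 1/2" "cin (ph 1) (ph 1) = 1/2" "cin (ph 0) (ph 1) = 0" using mm by auto
    have dens0: "density_mat (outer (ph 0) + outer (ph 1))"
      unfolding density_mat_def hermitian_mat_def
    proof (intro conjI allI)
      show "cadj (outer (ph 0) + outer (ph 1)) = outer (ph 0) + outer (ph 1)" by (simp add: cadj_add cadj_outer)
      show "0 \<le> Re (\<Sum>i\<in>UNIV. \<Sum>j\<in>UNIV. cnj (v $ i) * (outer (ph 0) + outer (ph 1)) $ i $ j * v $ j)" for v
        by (rule psd_outer2)
      show "mtrace (outer (ph 0) + outer (ph 1)) = 1" using nrm by (simp add: mtrace_outer2)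
    qed
    have dens: "density_mat (ptrace2 (outer \<Upsilon>))" unfolding sig by (rule dens0)
    have cond: "(1 / sqrt 3) * cmod (\<Sum>i=1..3. mtrace (U ** (outer (ph 0) + outer (ph 1)) ** cadj U ** kron (pdot (u i)) (pdot (v i)))) \<le> 1"
      if U: "unitary_mat U" and un: "\<forall>i\<in>{1..3}. norm (u i) = 1"
        and vo: "\<forall>i\<in>{1..3}. \<forall>j\<in>{1..3}. v i \<bullet> v j = (if i = j then 1 else (0::real))"
      for U :: "complex^(2\<times>2)^(2\<times>2)" and u v :: "nat \<Rightarrow> real^3"
    proof -
      have "cmod (\<Sum>i=1..3. mtrace (U ** (outer (ph 0) + outer (ph 1)) ** cadj U ** kron (pdot (u i)) (pdot (v i)))) \<le> sqrt 3"
        unfolding trace_form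
        by (rule bound) (simp_all add: unitary_cin[OF U] o un vo)
      then show ?thesis by (simp add: field_simps)
    qed
    show "ptrace2 (outer \<Upsilon>) \<in> AUS3"
      unfolding AUS3_def using dens cond by (auto simp: sig)
  qed
qed

end
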